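(* Let $(Y,\leq)$ be a partial order with $|Y|=\omega_1$. Then there is a cofinal subset $X\subseteq Y$ such that $(X,\leq)$ is well-founded and, for every $x\in X$, the set $(-\infty,x)_X=\{z\in X: z<x\}$ is countable.
   Context: A subset $X\subseteq Y$ is cofinal if for every $y\in Y$ there is $x\in X$ with $y\leq x$. *)

theory Defs
  imports Main "HOL-Library.Countable_Set"
begin

end

theory Submission
  imports Defs
begin

theorem mainTheorem1:
  fixes Y :: "'a set" and r :: "'a rel"
  assumes "partial_order_on Y r"
    and "(card_of Y, cardSuc natLeq) \<in> ordIso"
  shows "\<exists>X. X \<subseteq> Y
    \<and> (\<forall>y\<in>Y. \<exists>x\<in>X. (y, x) \<in> r)
    \<and> wf {(z, x). z \<in> X \<and> x \<in> X \<and> (z, x) \<in> r \<and> z \<noteq> x}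
    \<and> (\<forall>x\<in>X. countable {z \<in> X. (z, x) \<in> r \<and> z \<noteq> x})"
proof -
  define s where "s = cardSuc natLeq"
  have Cs: "Card_order s" unfolding s_def by (simp add: cardSuc_Card_order natLeq_Card_order)
  have WOs: "Well_order s" using Cs by (simp add: card_order_on_def)
  have "(card_of Y, card_of (Field s)) \<in> ordIso"
    using ordIso_transitive[OF assms(2)[folded s_def] ordIso_symmetric[OF card_of_Field_ordIso[OF Cs]]] .
  then obtain f where bij: "bij_betw f Y (Field s)" using card_of_ordIso by blast
  have inj: "inj_on f Y" and fY: "\<And>y. y \<in> Y \<Longrightarrow> f y \<in> Field s"
    using bij by (auto simp: bij_betw_def)
  have wfs: "wf (s - Id)" and lin: "linear_order_on (Field s) s"
    using WOs by (auto simp: well_order_on_def)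
  have tot: "\<And>a b. a \<in> Field s \<Longrightarrow> b \<in> Field s \<Longrightarrow> a \<noteq> b \<Longrightarrow> (a,b) \<in> s \<or> (b,a) \<in> s"
    using lin by (auto simp: linear_order_on_def total_on_def)
  define R where "R = {(y,z). y \<in> Y \<and> z \<in> Y \<and> (f y, f z) \<in> s - Id}"
  have wfR: "wf R"
  proof -
    have "R \<subseteq> inv_image (s - Id) f" unfolding R_def by auto
    thus ?thesis using wf_inv_image[OF wfs] wf_subset by blast
  qed
  have po: "refl_on Y r" "trans r" "antisym r" "r \<subseteq> Y \<times> Y"
    using assms(1) by (auto simp: partial_order_on_def preorder_on_def)
  define X where "X = {y \<in> Y. \<forall>z. (z,y) \<in> R \<longrightarrow> (y,z) \<notin> r}"
  have sub: "X \<subseteq> Y" unfolding X_def by auto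
  have cof: "\<forall>y\<in>Y. \<exists>x\<in>X. (y, x) \<in> r"
  proof
    fix y assume y: "y \<in> Y"
    let ?S = "{z \<in> Y. (y,z) \<in> r}"
    have "y \<in> ?S" using y po(1) by (auto simp: refl_on_def)
    then obtain x where x: "x \<in> ?S" and mn: "\<And>z. (z,x) \<in> R \<Longrightarrow> z \<notin> ?S"
      using wfE_min[OF wfR, of y ?S] by blast
    have "x \<in> X"
    proof -
      { fix z assume zx: "(z,x) \<in> R" and xz: "(x,z) \<in> r"
        have "(y,z) \<in> r" using x xz po(2) by (auto dest: transD)
        moreover have "z \<in> Y" using zx R_def by auto
        ultimately have False using mn[OF zx] by auto }
      thus ?thesis using x unfolding X_def by auto
    qed
    thus "\<exists>x\<in>X. (y, x) \<in> r" using x by auto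
  qed
  have key: "\<And>z x. z \<in> X \<Longrightarrow> x \<in> X \<Longrightarrow> (z,x) \<in> r \<Longrightarrow> z \<noteq> x \<Longrightarrow> (z,x) \<in> R"
  proof -
    fix z x assume z: "z \<in> X" and x: "x \<in> X" and zx: "(z,x) \<in> r" and ne: "z \<noteq> x"
    have zY: "z \<in> Y" and xY: "x \<in> Y" using z x sub by auto
    have fne: "f z \<noteq> f x" using inj ne zY xY by (auto simp: inj_on_def)
    show "(z,x) \<in> R"
    proof (rule ccontr)
      assume "(z,x) \<notin> R"
      hence "(f x, f z) \<in> s" using tot[OF fY[OF zY] fY[OF xY] fne] zY xY fne unfolding R_def by auto
      hence "(x,z) \<in> R" using zY xY fne unfolding R_def by auto
      thus False using z zx unfolding X_def by auto
    qed
  qed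
  have wfX: "wf {(z, x). z \<in> X \<and> x \<in> X \<and> (z, x) \<in> r \<and> z \<noteq> x}"
    by (rule wf_subset[OF wfR]) (auto intro: key)
  have cnt: "\<forall>x\<in>X. countable {z \<in> X. (z, x) \<in> r \<and> z \<noteq> x}"
  proof
    fix x assume x: "x \<in> X"
    let ?A = "{z \<in> X. (z, x) \<in> r \<and> z \<noteq> x}"
    have "(card_of (underS s (f x)), s) \<in> ordLess" using card_of_underS[OF Cs] fY x sub by blast
    hence "(card_of (underS s (f x)), natLeq) \<in> ordLeq"
      unfolding s_def using cardSuc_ordLeq_ordLess[OF natLeq_Card_order card_of_Card_order] by metis
    hence "(card_of (underS s (f x)), card_of (UNIV :: nat set)) \<in> ordLeq"
      using ordLeq_ordIso_trans[OF _ ordIso_symmetric[OF card_of_nat]] by blast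
    then obtain g :: "_ \<Rightarrow> nat" where "inj_on g (underS s (f x))"
      using card_of_ordLeq[symmetric, of "underS s (f x)" "UNIV :: nat set"] by blast
    hence c: "countable (underS s (f x))" unfolding countable_def by blast
    have "f ` ?A \<subseteq> underS s (f x)"
      using key x unfolding R_def underS_def by auto
    hence "countable (f ` ?A)" using c countable_subset by blast
    moreover have "inj_on f ?A" using inj sub by (auto intro: inj_on_subset)
    ultimately show "countable ?A" using countable_image_inj_on by blast
  qed
  show ?thesis using sub cof wfX cnt by blast
qed

end
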